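(* Let $G$ be a finite group, acting on itself by left multiplication. There is a one-to-one correspondence between rank $3$ $G$-invariant matroid structures on $G$ and pairs $(H,\sim)$ consisting of a proper subgroup $H \subseteq G$ and a nontrivial equivalence relation $\sim$ on $G/H - \{\bar{1}\}$ satisfying: (1) if $\bar{a} \sim \bar{b}$ and $\bar{a} \neq \bar{b}$, then $\overline{a^{-1}} \sim \overline{a^{-1}b}$; (2) if $\bar{a} \sim \bar{b}$ and $h \in H$, then $\overline{ha} \sim \overline{hb}$. Furthermore, under this correspondence $H$ is the trivial group if and only if the matroid is simple.
   Context: $G/H$ denotes the set of left cosets of $H$ and $\bar{a}$ denotes the coset $aH$. A matroid on a $G$-set $X$ is $G$-invariant if for every $g \in G$ and every basis $B$, the set $gB$ is again a basis. An equivalence relation is nontrivial if it has at least two equivalence classes. A matroid is simple if every circuit has at least three elements. *)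

theory Defs
  imports "HOL-Algebra.Left_Coset"
begin

definition matroid_bases :: "'a set \<Rightarrow> 'a set set \<Rightarrow> bool" where
  "matroid_bases E \<B> \<longleftrightarrow> finite E \<and> \<B> \<noteq> {} \<and> (\<forall>B\<in>\<B>. B \<subseteq> E) \<and>
     (\<forall>B1\<in>\<B>. \<forall>B2\<in>\<B>. \<forall>x\<in>B1 - B2. \<exists>y\<in>B2 - B1. insert y (B1 - {x}) \<in> \<B>)"

definition m_indep :: "'a set set \<Rightarrow> 'a set \<Rightarrow> bool" where
  "m_indep \<B> I \<longleftrightarrow> (\<exists>B\<in>\<B>. I \<subseteq> B)"

definition m_rank_of :: "'a set set \<Rightarrow> 'a set \<Rightarrow> nat" where
  "m_rank_of \<B> X = Max (card ` {I. I \<subseteq> X \<and> m_indep \<B> I})"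

definition matroid_rank :: "'a set \<Rightarrow> 'a set set \<Rightarrow> nat" where
  "matroid_rank E \<B> = m_rank_of \<B> E"

definition m_closure :: "'a set \<Rightarrow> 'a set set \<Rightarrow> 'a set \<Rightarrow> 'a set" where
  "m_closure E \<B> X = {x \<in> E. m_rank_of \<B> (insert x X) = m_rank_of \<B> X}"

definition m_circuit :: "'a set \<Rightarrow> 'a set set \<Rightarrow> 'a set \<Rightarrow> bool" where
  "m_circuit E \<B> C \<longleftrightarrow> C \<subseteq> E \<and> \<not> m_indep \<B> C \<and> (\<forall>D. D \<subset> C \<longrightarrow> m_indep \<B> D)"

definition simple_matroid :: "'a set \<Rightarrow> 'a set set \<Rightarrow> bool" where
  "simple_matroid E \<B> \<longleftrightarrow> (\<forall>C. m_circuit E \<B> C \<longrightarrow> card C \<ge> 3)"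

definition G_invariant :: "('a, 'b) monoid_scheme \<Rightarrow> 'a set set \<Rightarrow> bool" where
  "G_invariant G \<B> \<longleftrightarrow> (\<forall>g\<in>carrier G. \<forall>B\<in>\<B>. g <#\<^bsub>G\<^esub> B \<in> \<B>)"

definition rank3_inv_matroids :: "('a, 'b) monoid_scheme \<Rightarrow> 'a set set set" where
  "rank3_inv_matroids G = {\<B>. matroid_bases (carrier G) \<B> \<and> G_invariant G \<B>
                               \<and> matroid_rank (carrier G) \<B> = 3}"

definition valid_pair :: "('a, 'b) monoid_scheme \<Rightarrow> 'a set \<Rightarrow> ('a set \<times> 'a set) set \<Rightarrow> bool" where
  "valid_pair G H r \<longleftrightarrow>
     subgroup H G \<and> H \<noteq> carrier G \<and>
     equiv (lcosets\<^bsub>G\<^esub> H - {\<one>\<^bsub>G\<^esub> <#\<^bsub>G\<^esub> H}) r \<and>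
     card ((lcosets\<^bsub>G\<^esub> H - {\<one>\<^bsub>G\<^esub> <#\<^bsub>G\<^esub> H}) // r) \<ge> 2 \<and>
     (\<forall>a\<in>carrier G. \<forall>b\<in>carrier G.
        (a <#\<^bsub>G\<^esub> H, b <#\<^bsub>G\<^esub> H) \<in> r \<and> a <#\<^bsub>G\<^esub> H \<noteq> b <#\<^bsub>G\<^esub> H \<longrightarrow>
        (inv\<^bsub>G\<^esub> a <#\<^bsub>G\<^esub> H, (inv\<^bsub>G\<^esub> a \<otimes>\<^bsub>G\<^esub> b) <#\<^bsub>G\<^esub> H) \<in> r) \<and>
     (\<forall>a\<in>carrier G. \<forall>b\<in>carrier G. \<forall>h\<in>H.
        (a <#\<^bsub>G\<^esub> H, b <#\<^bsub>G\<^esub> H) \<in> r \<longrightarrow>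
        ((h \<otimes>\<^bsub>G\<^esub> a) <#\<^bsub>G\<^esub> H, (h \<otimes>\<^bsub>G\<^esub> b) <#\<^bsub>G\<^esub> H) \<in> r)"

definition valid_pairs :: "('a, 'b) monoid_scheme \<Rightarrow> ('a set \<times> ('a set \<times> 'a set) set) set" where
  "valid_pairs G = {(H, r). valid_pair G H r}"

section \<open>The correspondence: H = cl{1}, and two nontrivial cosets are related
  iff they lie on the same line (rank-2 flat) through 1\<close>

definition matroid_to_pair ::
  "('a, 'b) monoid_scheme \<Rightarrow> 'a set set \<Rightarrow> 'a set \<times> ('a set \<times> 'a set) set" where
  "matroid_to_pair G \<B> =
     (let H = m_closure (carrier G) \<B> {\<one>\<^bsub>G\<^esub>};
          S = lcosets\<^bsub>G\<^esub> H - {\<one>\<^bsub>G\<^esub> <#\<^bsub>G\<^esub> H}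
      in (H, {(A, B). A \<in> S \<and> B \<in> S \<and>
               m_closure (carrier G) \<B> (insert \<one>\<^bsub>G\<^esub> A) =
               m_closure (carrier G) \<B> (insert \<one>\<^bsub>G\<^esub> B)}))"

end

theory Submission
  imports Defs
begin


section \<open>General matroid facts\<close>

lemma mb_finite: "matroid_bases E BB \<Longrightarrow> finite E" by (simp add: matroid_bases_def)
lemma mb_sub: "matroid_bases E BB \<Longrightarrow> B \<in> BB \<Longrightarrow> B \<subseteq> E" by (auto simp add: matroid_bases_def)
lemma mb_exch: "matroid_bases E BB \<Longrightarrow> B1 \<in> BB \<Longrightarrow> B2 \<in> BB \<Longrightarrow> x \<in> B1 - B2
  \<Longrightarrow> \<exists>y\<in>B2 - B1. insert y (B1 - {x}) \<in> BB"
  unfolding matroid_bases_def by blast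

lemma bases_card_eq:
  assumes M: "matroid_bases E BB" and B1: "B1 \<in> BB" and B2: "B2 \<in> BB"
  shows "card B1 = card B2"
  using B1
proof (induction "card (B1 - B2)" arbitrary: B1 rule: less_induct)
  case less
  have fE: "finite E" using M by (rule mb_finite)
  have fB1: "finite B1" using mb_sub[OF M less.prems] fE finite_subset by blast
  have fB2: "finite B2" using mb_sub[OF M B2] fE finite_subset by blast
  show ?case
  proof (cases "B1 - B2 = {}")
    case True
    then have sub: "B1 \<subseteq> B2" by blast
    have "B2 - B1 = {}"
    proof (rule ccontr)
      assume "B2 - B1 \<noteq> {}"
      then obtain x where "x \<in> B2 - B1" by blast
      from mb_exch[OF M B2 less.prems this] True show False by blast
    qed
    then have "B1 = B2" using sub by blast
    then show ?thesis by simp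
  next
    case False
    then obtain x where x: "x \<in> B1 - B2" by blast
    from mb_exch[OF M less.prems B2 x] obtain y where y: "y \<in> B2 - B1"
      and B1': "insert y (B1 - {x}) \<in> BB" by blast
    have eq: "insert y (B1 - {x}) - B2 = (B1 - B2) - {x}" using y by blast
    have "card ((B1 - B2) - {x}) < card (B1 - B2)"
      using x fB1 by (meson card_Diff1_less finite_Diff)
    then have "card (insert y (B1 - {x})) = card B2"
      using less.hyps[OF _ B1'] eq by simp
    moreover have "card (insert y (B1 - {x})) = card B1"
      using x y fB1 by (simp add: card.insert_remove) (metis Suc_pred card_gt_0_iff empty_iff)
    ultimately show ?thesis by simp
  qed
qed

lemma indep_subset: "m_indep BB I \<Longrightarrow> J \<subseteq> I \<Longrightarrow> m_indep BB J"
  unfolding m_indep_def by blast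

lemma indep_sub_E: "matroid_bases E BB \<Longrightarrow> m_indep BB I \<Longrightarrow> I \<subseteq> E"
  unfolding m_indep_def using mb_sub by blast

lemma indep_finite: "matroid_bases E BB \<Longrightarrow> m_indep BB I \<Longrightarrow> finite I"
  using indep_sub_E mb_finite finite_subset by metis

lemma augment:
  assumes M: "matroid_bases E BB" and I: "m_indep BB I" and J: "m_indep BB J"
    and lt: "card I < card J"
  shows "\<exists>x\<in>J - I. m_indep BB (insert x I)"
proof (rule ccontr)
  assume na: "\<not> ?thesis"
  have fE: "finite E" using M by (rule mb_finite)
  obtain BJ where BJ: "BJ \<in> BB" "J \<subseteq> BJ" using J unfolding m_indep_def by blast
  obtain B0 where B0: "B0 \<in> BB" "I \<subseteq> B0" using I unfolding m_indep_def by blast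
  obtain B where B: "B \<in> BB \<and> I \<subseteq> B"
    and Bmin: "\<And>B'. B' \<in> BB \<and> I \<subseteq> B' \<Longrightarrow> card (B - (I \<union> BJ)) \<le> card (B' - (I \<union> BJ))"
    using ex_has_least_nat[of "\<lambda>B. B \<in> BB \<and> I \<subseteq> B" B0 "\<lambda>B. card (B - (I \<union> BJ))"] B0
    by blast
  have fB: "finite B" using mb_sub[of E BB B] M B fE finite_subset by blast
  have BJs: "BJ \<subseteq> E" using mb_sub M BJ by blast
  have fBJ: "finite BJ" using BJs fE finite_subset by blast
  have empty: "B - (I \<union> BJ) = {}"
  proof (rule ccontr)
    assume "B - (I \<union> BJ) \<noteq> {}"
    then obtain x where x: "x \<in> B - (I \<union> BJ)" by blast
    then have "x \<in> B - BJ" by blast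
    from mb_exch[OF M _ BJ(1) this] B obtain y where y: "y \<in> BJ - B"
      and B': "insert y (B - {x}) \<in> BB" by blast
    have IB': "I \<subseteq> insert y (B - {x})" using B x by blast
    have eq: "insert y (B - {x}) - (I \<union> BJ) = (B - (I \<union> BJ)) - {x}" using y by blast
    have "card ((B - (I \<union> BJ)) - {x}) < card (B - (I \<union> BJ))"
      using x fB by (meson card_Diff1_less finite_Diff)
    with Bmin[of "insert y (B - {x})"] B' IB' eq show False by simp
  qed
  have "B \<inter> J \<subseteq> I"
  proof
    fix x assume x: "x \<in> B \<inter> J"
    show "x \<in> I"
    proof (rule ccontr)
      assume "x \<notin> I"
      then have "x \<in> J - I" using x by blast
      moreover have "m_indep BB (insert x I)" unfolding m_indep_def using B x by blast
      ultimately show False using na by blast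
    qed
  qed
  then have "B \<subseteq> I \<union> (BJ - J)" using empty by blast
  then have "card B \<le> card (I \<union> (BJ - J))"
    using fBJ indep_finite[OF M I] by (intro card_mono) auto
  also have "\<dots> \<le> card I + card (BJ - J)" by (rule card_Un_le)
  also have "card (BJ - J) = card BJ - card J" using BJ fBJ
    by (meson card_Diff_subset finite_subset)
  finally have "card B < card BJ"
    using lt card_mono[OF fBJ BJ(2)] by linarith
  moreover have "card B = card BJ" using bases_card_eq[OF M] B BJ by blast
  ultimately show False by simp
qed

lemma rank_bound:
  assumes M: "matroid_bases E BB"
  shows "finite (card ` {I. I \<subseteq> X \<and> m_indep BB I})"
proof -
  have "card ` {I. I \<subseteq> X \<and> m_indep BB I} \<subseteq> {..card E}"
    using indep_sub_E[OF M] mb_finite[OF M] by (auto intro: card_mono)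
  then show ?thesis using finite_subset by blast
qed

lemma rank_ge:
  assumes M: "matroid_bases E BB" and "I \<subseteq> X" "m_indep BB I"
  shows "card I \<le> m_rank_of BB X"
  unfolding m_rank_of_def using assms rank_bound[OF M] by (intro Max_ge) auto

lemma rank_eqI:
  assumes M: "matroid_bases E BB" and "I \<subseteq> X" "m_indep BB I" "card I = k"
    and "\<And>J. J \<subseteq> X \<Longrightarrow> m_indep BB J \<Longrightarrow> card J \<le> k"
  shows "m_rank_of BB X = k"
  unfolding m_rank_of_def using assms rank_bound[OF M]
  by (intro Max_eqI) auto

lemma rank_basis:
  assumes M: "matroid_bases E BB" and B: "B \<in> BB"
  shows "m_rank_of BB E = card B"
proof (rule rank_eqI[OF M])
  show "B \<subseteq> E" using mb_sub[OF M B] .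
  show "m_indep BB B" unfolding m_indep_def using B by blast
  fix J assume "J \<subseteq> E" "m_indep BB J"
  then obtain B' where "B' \<in> BB" "J \<subseteq> B'" unfolding m_indep_def by blast
  then show "card J \<le> card B"
    using bases_card_eq[OF M _ B] mb_sub[OF M] mb_finite[OF M]
    by (metis card_mono finite_subset)
qed simp



context group
begin

lemma l_coset_insert: "g <# insert x X = insert (g \<otimes> x) (g <# X)"
  unfolding l_coset_def by auto

lemma l_coset_empty: "g <# {} = {}"
  unfolding l_coset_def by auto

lemma lcos_mem_iff:
  assumes "subgroup H G" "a \<in> carrier G" "x \<in> carrier G"
  shows "x \<in> a <# H \<longleftrightarrow> inv a \<otimes> x \<in> H"
proof
  assume "x \<in> a <# H"
  then show "inv a \<otimes> x \<in> H" using subgroup.lcos_module_imp[OF assms(1) is_group assms(2)] by blast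
next
  assume h: "inv a \<otimes> x \<in> H"
  have "x = a \<otimes> (inv a \<otimes> x)" using assms by (simp add: m_assoc[symmetric])
  then show "x \<in> a <# H" unfolding l_coset_def using h by blast
qed

lemma lcos_eq_iff:
  assumes H: "subgroup H G" and a: "a \<in> carrier G" and b: "b \<in> carrier G"
  shows "a <# H = b <# H \<longleftrightarrow> inv a \<otimes> b \<in> H"
proof
  assume "a <# H = b <# H"
  moreover have "b \<in> b <# H" using lcos_self[OF b H] .
  ultimately show "inv a \<otimes> b \<in> H" using lcos_mem_iff[OF H a b] by simp
next
  assume h: "inv a \<otimes> b \<in> H"
  have hc: "inv a \<otimes> b \<in> carrier G" using a b by simp
  have "b = a \<otimes> (inv a \<otimes> b)" using a b by (simp add: m_assoc[symmetric])
  then have "b <# H = a <# ((inv a \<otimes> b) <# H)"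
    using lcos_m_assoc[OF subgroup.subset[OF H] a hc] by simp
  also have "(inv a \<otimes> b) <# H = H" using coset_join3[OF hc H h] .
  finally show "a <# H = b <# H" by simp
qed

lemma lcos_one_iff:
  assumes H: "subgroup H G" and a: "a \<in> carrier G"
  shows "a <# H = \<one> <# H \<longleftrightarrow> a \<in> H"
  using lcos_eq_iff[OF H a one_closed] a
  by (metis H inv_closed inv_inv lcos_eq_iff one_closed r_one subgroup.m_inv_closed)

lemma lcosetsI: "a \<in> carrier G \<Longrightarrow> a <# H \<in> lcosets H"
  unfolding LCOSETS_def by blast

lemma lcosetsE: "A \<in> lcosets H \<Longrightarrow> (\<And>a. a \<in> carrier G \<Longrightarrow> A = a <# H \<Longrightarrow> P) \<Longrightarrow> P"
  unfolding LCOSETS_def by blast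

lemma inv_mult_cancel: "x \<in> carrier G \<Longrightarrow> y \<in> carrier G \<Longrightarrow> z \<in> carrier G \<Longrightarrow>
   inv (inv x \<otimes> y) \<otimes> (inv x \<otimes> z) = inv y \<otimes> z"
  by (simp add: inv_mult_group m_assoc[symmetric]) (simp add: m_assoc)

lemma inv_mult_transl: "g \<in> carrier G \<Longrightarrow> x \<in> carrier G \<Longrightarrow> y \<in> carrier G \<Longrightarrow>
   inv (g \<otimes> x) \<otimes> (g \<otimes> y) = inv x \<otimes> y"
  by (simp add: inv_mult_group m_assoc[symmetric]) (simp add: m_assoc)

end

locale r3m = group G for G :: "('a, 'b) monoid_scheme" (structure) +
  fixes BB :: "'a set set"
  assumes mb: "matroid_bases (carrier G) BB"
    and ginv: "G_invariant G BB"
    and rk: "matroid_rank (carrier G) BB = 3"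
begin

abbreviation ind where "ind \<equiv> m_indep BB"

definition P where "P = {x \<in> carrier G. x = \<one> \<or> \<not> ind {\<one>, x}}"

lemma fin: "finite (carrier G)" using mb by (rule mb_finite)

lemma ex_basis: "\<exists>B. B \<in> BB" using mb unfolding matroid_bases_def by blast

lemma card3: "B \<in> BB \<Longrightarrow> card B = 3"
  using rank_basis[OF mb] rk unfolding matroid_rank_def by simp

lemma basis_sub: "B \<in> BB \<Longrightarrow> B \<subseteq> carrier G" using mb_sub[OF mb] .

lemma ind_sub: "ind I \<Longrightarrow> I \<subseteq> carrier G" using indep_sub_E[OF mb] .

lemma ind_card: "ind I \<Longrightarrow> card I \<le> 3"
  unfolding m_indep_def using card3 basis_sub fin
  by (metis card_mono finite_subset)

lemma basis_iff: "T \<in> BB \<longleftrightarrow> ind T \<and> card T = 3"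
proof
  assume "T \<in> BB" then show "ind T \<and> card T = 3" using card3 unfolding m_indep_def by blast
next
  assume a: "ind T \<and> card T = 3"
  then obtain B where B: "B \<in> BB" "T \<subseteq> B" unfolding m_indep_def by blast
  have "finite B" using basis_sub[OF B(1)] fin finite_subset by blast
  then have "T = B" using card_subset_eq[OF _ B(2)] a card3[OF B(1)] by simp
  then show "T \<in> BB" using B by simp
qed

lemma transl_B_aux: "g \<in> carrier G \<Longrightarrow> X \<in> BB \<Longrightarrow> g <# X \<in> BB"
  using ginv unfolding G_invariant_def by blast

lemma transl_B:
  assumes g: "g \<in> carrier G" and X: "X \<subseteq> carrier G"
  shows "g <# X \<in> BB \<longleftrightarrow> X \<in> BB"
proof
  assume "g <# X \<in> BB"
  then have "inv g <# (g <# X) \<in> BB" using transl_B_aux g by simp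
  also have "inv g <# (g <# X) = X" using lcos_m_assoc[OF X inv_closed[OF g] g] g X
    by (simp add: lcos_mult_one)
  finally show "X \<in> BB" .
qed (use transl_B_aux g in blast)

lemma transl_ind_aux: assumes g: "g \<in> carrier G" and X: "ind X" shows "ind (g <# X)"
proof -
  obtain B where B: "B \<in> BB" "X \<subseteq> B" using X unfolding m_indep_def by blast
  have "g <# X \<subseteq> g <# B" using B(2) unfolding l_coset_def by blast
  moreover have "g <# B \<in> BB" using transl_B_aux[OF g B(1)] .
  ultimately show ?thesis unfolding m_indep_def by blast
qed

lemma transl_ind:
  assumes g: "g \<in> carrier G" and X: "X \<subseteq> carrier G"
  shows "ind (g <# X) \<longleftrightarrow> ind X"
proof
  assume "ind (g <# X)"
  then have "ind (inv g <# (g <# X))" using transl_ind_aux g by simp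
  also have "inv g <# (g <# X) = X" using lcos_m_assoc[OF X inv_closed[OF g] g] g X
    by (simp add: lcos_mult_one)
  finally show "ind X" .
qed (use transl_ind_aux g in blast)

lemma B3_transl: "g \<in> carrier G \<Longrightarrow> x \<in> carrier G \<Longrightarrow> y \<in> carrier G \<Longrightarrow> z \<in> carrier G \<Longrightarrow>
   {g \<otimes> x, g \<otimes> y, g \<otimes> z} \<in> BB \<longleftrightarrow> {x, y, z} \<in> BB"
  using transl_B[of g "{x,y,z}"] by (simp add: l_coset_insert l_coset_empty)

lemma ind2_transl: "g \<in> carrier G \<Longrightarrow> x \<in> carrier G \<Longrightarrow> y \<in> carrier G \<Longrightarrow>
   ind {g \<otimes> x, g \<otimes> y} \<longleftrightarrow> ind {x, y}"
  using transl_ind[of g "{x,y}"] by (simp add: l_coset_insert l_coset_empty)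

lemma ind_empty: "ind {}"
  using ex_basis unfolding m_indep_def by blast

lemma ind_single:
  assumes x: "x \<in> carrier G" shows "ind {x}"
proof -
  obtain B where B: "B \<in> BB" using ex_basis by blast
  then have "B \<noteq> {}" using card3 by fastforce
  then obtain b where b: "b \<in> B" by blast
  have bc: "b \<in> carrier G" using b basis_sub B by blast
  have "ind {b}" using b B unfolding m_indep_def by blast
  then have "ind ((x \<otimes> inv b) <# {b})" using transl_ind[of "x \<otimes> inv b" "{b}"] x bc by simp
  then show ?thesis using x bc by (simp add: l_coset_insert l_coset_empty m_assoc)
qed

lemma par_trans:
  assumes "x \<in> carrier G" "y \<in> carrier G" "z \<in> carrier G"
    and "x \<noteq> y" "y \<noteq> z" "x \<noteq> z"
    and "\<not> ind {x, y}" "\<not> ind {y, z}"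
  shows "\<not> ind {x, z}"
proof
  assume "ind {x, z}"
  from augment[OF mb ind_single[OF assms(2)] this] assms(6)
  obtain w where w: "w = x \<or> w = z" "ind (insert w {y})" by auto
  from w(1) show False
  proof
    assume "w = x" then show False using w(2) assms(7) by simp
  next
    assume "w = z" then show False using w(2) assms(8) by (simp add: insert_commute)
  qed
qed

lemma ind2_iff:
  assumes x: "x \<in> carrier G" and y: "y \<in> carrier G" and xy: "x \<noteq> y"
  shows "ind {x, y} \<longleftrightarrow> inv x \<otimes> y \<notin> P"
proof -
  have "ind {x, y} \<longleftrightarrow> ind {inv x \<otimes> x, inv x \<otimes> y}"
    using ind2_transl[of "inv x" x y] x y by simp
  moreover have "inv x \<otimes> y \<noteq> \<one>"
  proof
    assume h: "inv x \<otimes> y = \<one>"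
    have "y = x \<otimes> (inv x \<otimes> y)" using x y by (simp add: m_assoc[symmetric])
    also have "\<dots> = x" using h x by simp
    finally show False using xy by simp
  qed
  ultimately show ?thesis unfolding P_def using x y by auto
qed

lemma P_sub: "P \<subseteq> carrier G" unfolding P_def by blast
lemma one_P: "\<one> \<in> P" unfolding P_def by simp

lemma P_inv: assumes "x \<in> P" shows "inv x \<in> P"
proof (cases "x = \<one>")
  case False
  have x: "x \<in> carrier G" using assms P_sub by blast
  have "\<not> ind {\<one>, x}" using assms False unfolding P_def by blast
  then have "\<not> ind {inv x \<otimes> \<one>, inv x \<otimes> x}" using ind2_transl[of "inv x" \<one> x] x by simp
  then have "\<not> ind {\<one>, inv x}" using x by (simp add: insert_commute)
  then show ?thesis unfolding P_def using x by simp
qed (use one_P in simp)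

lemma P_mult: assumes "x \<in> P" "y \<in> P" shows "x \<otimes> y \<in> P"
proof -
  have x: "x \<in> carrier G" and y: "y \<in> carrier G" using assms P_sub by blast+
  show ?thesis
  proof (cases "x = \<one> \<or> y = \<one> \<or> x \<otimes> y = \<one>")
    case True then show ?thesis using assms x y one_P by auto
  next
    case False
    have a: "\<not> ind {\<one>, x}" using assms False unfolding P_def by blast
    have "\<not> ind {\<one>, y}" using assms False unfolding P_def by blast
    then have b: "\<not> ind {x, x \<otimes> y}" using ind2_transl[of x \<one> y] x y by simp
    have d: "\<one> \<noteq> x" "\<one> \<noteq> x \<otimes> y" using False by auto
    have xne: "x \<noteq> x \<otimes> y"
    proof
      assume "x = x \<otimes> y"
      then have "y = \<one>" by (rule iffD1[OF l_cancel_one'[OF x y]])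
      then show False using False by blast
    qed
    have "\<not> ind {\<one>, x \<otimes> y}"
      by (rule par_trans[OF one_closed x m_closed[OF x y] d(1) xne d(2) a b])
    then show ?thesis unfolding P_def using x y by simp
  qed
qed

lemma P_subgroup: "subgroup P G"
  by (rule subgroupI[OF P_sub _ P_inv P_mult]) (use one_P in blast)

lemma PR:
  assumes p: "p \<in> carrier G" and q: "q \<in> carrier G"
    and B: "{p, x, y} \<in> BB" and pq: "q = p \<or> \<not> ind {p, q}"
  shows "{q, x, y} \<in> BB"
proof (cases "q = p")
  case False
  then have npq: "\<not> ind {p, q}" using pq by blast
  have c3: "card {p, x, y} = 3" using card3 B by blast
  have iB: "ind {p, x, y}" using B unfolding m_indep_def by blast
  have qx: "q \<notin> {x, y}"
  proof
    assume "q \<in> {x, y}"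
    then have "{p, q} \<subseteq> {p, x, y}" by blast
    then show False using indep_subset[OF iB] npq by blast
  qed
  obtain w where w: "w \<in> {p, x, y} - {q}" "ind (insert w {q})"
    using augment[OF mb ind_single[OF q] iB] c3 by auto
  have wp: "w \<noteq> p"
  proof
    assume "w = p" then show False using w(2) npq by (simp add: insert_commute)
  qed
  have wxy: "w \<in> {x, y}" using w wp by blast
  have c2: "card {w, q} = 2" using qx wxy by auto
  obtain w' where w': "w' \<in> {p, x, y} - {w, q}" "ind (insert w' {w, q})"
    using augment[OF mb w(2)[simplified] iB] c2 c3 by auto
  have w'p: "w' \<noteq> p"
  proof
    assume "w' = p"
    then have "{p, q} \<subseteq> insert w' {w, q}" by blast
    then show False using indep_subset[OF w'(2)] npq by blast
  qed
  have eq: "insert w' {w, q} = {q, x, y}" using w' w'p wxy by blast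
  have xy: "x \<noteq> y"
  proof
    assume "x = y"
    then have "card {p, x, y} \<le> 2" by (simp add: card_insert_if)
    then show False using c3 by simp
  qed
  have c: "card {q, x, y} = 3" using xy qx by (simp add: card_insert_if)
  have "ind {q, x, y}" using w'(2) eq by simp
  then show ?thesis using basis_iff c by blast
qed (use B in simp)

end



definition Cr :: "('a, 'b) monoid_scheme \<Rightarrow> 'a set \<Rightarrow> ('a set \<times> 'a set) set \<Rightarrow> 'a \<Rightarrow> 'a \<Rightarrow> bool" where
  "Cr G H r u v \<longleftrightarrow> u \<in> H \<or> v \<in> H \<or> (u <#\<^bsub>G\<^esub> H, v <#\<^bsub>G\<^esub> H) \<in> r"

definition colr :: "('a, 'b) monoid_scheme \<Rightarrow> 'a set \<Rightarrow> ('a set \<times> 'a set) set \<Rightarrow> 'a \<Rightarrow> 'a \<Rightarrow> 'a \<Rightarrow> bool" where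
  "colr G H r x y z \<longleftrightarrow> Cr G H r (inv\<^bsub>G\<^esub> x \<otimes>\<^bsub>G\<^esub> y) (inv\<^bsub>G\<^esub> x \<otimes>\<^bsub>G\<^esub> z)"

definition BasesOf :: "('a, 'b) monoid_scheme \<Rightarrow> 'a set \<Rightarrow> ('a set \<times> 'a set) set \<Rightarrow> 'a set set" where
  "BasesOf G H r = {T. \<exists>x y z. T = {x, y, z} \<and> x \<in> carrier G \<and> y \<in> carrier G \<and> z \<in> carrier G
      \<and> \<not> colr G H r x y z}"

context r3m
begin

lemma pair_bound:
  assumes "J \<subseteq> {a, b}" "\<not> ind {a, b}" "ind J"
  shows "card J \<le> 1"
proof (rule ccontr)
  assume "\<not> card J \<le> 1"
  then have "card J \<ge> 2" by simp
  moreover have "card {a, b} \<le> 2" by (simp add: card_insert_if)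
  moreover have "card J \<le> card {a, b}" using assms(1) by (simp add: card_mono)
  ultimately have "card J = card {a, b}" by simp
  then have "J = {a, b}" using card_subset_eq[OF _ assms(1)] by simp
  then show False using assms by simp
qed

lemma rank_one: "m_rank_of BB {\<one>} = 1"
proof (rule rank_eqI[OF mb, of "{\<one>}"])
  fix J assume "J \<subseteq> {\<one>}" then show "card J \<le> 1"
    using card_mono[of "{\<one>}" J] by simp
qed (auto simp: ind_single)

lemma cl1: "m_closure (carrier G) BB {\<one>} = P"
proof -
  have "m_rank_of BB (insert x {\<one>}) = 1 \<longleftrightarrow> x \<in> P" if x: "x \<in> carrier G" for x
  proof (cases "x \<in> P")
    case True
    have "m_rank_of BB {x, \<one>} = 1"
    proof (rule rank_eqI[OF mb, of "{\<one>}"])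
      fix J assume J: "J \<subseteq> {x, \<one>}" "ind J"
      show "card J \<le> 1"
      proof (cases "x = \<one>")
        case True
        then show ?thesis using J(1) card_mono[of "{\<one>}" J] by simp
      next
        case False
        then have "\<not> ind {\<one>, x}" using \<open>x \<in> P\<close> unfolding P_def by blast
        then show ?thesis using pair_bound[of J \<one> x] J by (simp add: insert_commute)
      qed
    qed (auto simp: ind_single)
    then show ?thesis using True by simp
  next
    case False
    then have "x \<noteq> \<one>" using one_P by blast
    then have "ind {\<one>, x}" using False x unfolding P_def by blast
    then have "2 \<le> m_rank_of BB {x, \<one>}"
      using rank_ge[OF mb, of "{\<one>, x}" "{x, \<one>}"] \<open>x \<noteq> \<one>\<close> by (auto simp: insert_commute)
    then show ?thesis using False by simp
  qed
  then show ?thesis unfolding m_closure_def rank_one using P_sub by blast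
qed

definition L where "L a = {x \<in> carrier G. {\<one>, a, x} \<notin> BB}"

lemma par_in_coset:
  assumes a: "a \<in> carrier G" and y: "y \<in> a <# P" and z: "z \<in> a <# P" and yz: "y \<noteq> z"
  shows "\<not> ind {y, z}"
proof -
  have yc: "y \<in> carrier G" using l_coset_carrier[OF y a P_subgroup] .
  have zc: "z \<in> carrier G" using l_coset_carrier[OF z a P_subgroup] .
  have "inv a \<otimes> y \<in> P" "inv a \<otimes> z \<in> P"
    using lcos_mem_iff[OF P_subgroup a] yc zc y z by auto
  then have "inv (inv a \<otimes> y) \<otimes> (inv a \<otimes> z) \<in> P"
    using P_inv P_mult by blast
  then have "inv y \<otimes> z \<in> P" using inv_mult_cancel[OF a yc zc] by simp
  then show ?thesis using ind2_iff[OF yc zc yz] by simp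
qed

lemma Z:
  assumes a: "a \<in> carrier G" and x: "x \<in> carrier G"
    and I: "I \<subseteq> insert x (insert \<one> (a <# P))" "ind I" "3 \<le> card I"
  shows "{\<one>, a, x} \<in> BB"
proof -
  have cI: "card I = 3" using ind_card[OF I(2)] I(3) by simp
  have IB: "I \<in> BB" using basis_iff cI I(2) by simp
  have fI: "finite I" using indep_finite[OF mb I(2)] .
  define Q where "Q = I \<inter> (a <# P)"
  have Qeq: "y = z" if "y \<in> Q" "z \<in> Q" for y z
  proof (rule ccontr)
    assume "y \<noteq> z"
    then have "\<not> ind {y, z}" using par_in_coset[OF a] that unfolding Q_def by blast
    moreover have "{y, z} \<subseteq> I" using that unfolding Q_def by blast
    ultimately show False using indep_subset[OF I(2)] by blast
  qed
  show ?thesis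
  proof (cases "Q = {}")
    case True
    then have "I \<subseteq> {x, \<one>}" using I(1) unfolding Q_def by blast
    then have "card I \<le> card {x, \<one>}" by (simp add: card_mono)
    also have "\<dots> \<le> 2" by (simp add: card_insert_if)
    finally show ?thesis using cI by simp
  next
    case False
    then obtain y where yQ: "y \<in> Q" by blast
    have sub: "I \<subseteq> {x, \<one>, y}" using I(1) Qeq[OF yQ] unfolding Q_def by blast
    have "card {x, \<one>, y} \<le> 3" by (simp add: card_insert_if)
    moreover have "card I \<le> card {x, \<one>, y}" using sub by (simp add: card_mono)
    ultimately have "I = {x, \<one>, y}" using card_subset_eq[OF _ sub] cI by simp
    then have B1: "{y, \<one>, x} \<in> BB" using IB by (simp add: insert_commute)
    have y: "y \<in> a <# P" using yQ unfolding Q_def by blast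
    have yc: "y \<in> carrier G" using l_coset_carrier[OF y a P_subgroup] .
    have "inv a \<otimes> y \<in> P" using lcos_mem_iff[OF P_subgroup a yc] y by simp
    then have "inv (inv a \<otimes> y) \<in> P" using P_inv by blast
    then have "inv y \<otimes> a \<in> P" using a yc by (simp add: inv_mult_group)
    then have "a = y \<or> \<not> ind {y, a}" using ind2_iff[OF yc a] by blast
    then have "{a, \<one>, x} \<in> BB" by (rule PR[OF yc a B1])
    moreover have "{a, \<one>, x} = {\<one>, a, x}" by blast
    ultimately show ?thesis by simp
  qed
qed

lemma a_in: "a \<in> carrier G \<Longrightarrow> a \<in> a <# P"
  using lcos_self P_subgroup by blast

lemma ind_1a: assumes a: "a \<in> carrier G" "a \<notin> P" shows "ind {\<one>, a}" "\<one> \<noteq> a"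
proof -
  show "\<one> \<noteq> a" using a one_P by blast
  then show "ind {\<one>, a}" using ind2_iff[OF one_closed a(1)] a by simp
qed

lemma rank_line_x:
  assumes a: "a \<in> carrier G" "a \<notin> P" and x: "x \<in> carrier G"
  shows "m_rank_of BB (insert x (insert \<one> (a <# P))) = 2 \<longleftrightarrow> {\<one>, a, x} \<notin> BB"
proof
  assume r: "m_rank_of BB (insert x (insert \<one> (a <# P))) = 2"
  show "{\<one>, a, x} \<notin> BB"
  proof
    assume B: "{\<one>, a, x} \<in> BB"
    have "card {\<one>, a, x} \<le> m_rank_of BB (insert x (insert \<one> (a <# P)))"
      by (rule rank_ge[OF mb]) (use a_in[OF a(1)] B in \<open>auto simp: m_indep_def\<close>)
    then show False using r card3[OF B] by simp
  qed
next
  assume nB: "{\<one>, a, x} \<notin> BB"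
  show "m_rank_of BB (insert x (insert \<one> (a <# P))) = 2"
  proof (rule rank_eqI[OF mb, of "{\<one>, a}"])
    show "{\<one>, a} \<subseteq> insert x (insert \<one> (a <# P))" using a_in[OF a(1)] by blast
    show "ind {\<one>, a}" "card {\<one>, a} = 2" using ind_1a[OF a] by auto
    fix J assume J: "J \<subseteq> insert x (insert \<one> (a <# P))" "ind J"
    show "card J \<le> 2"
    proof (rule ccontr)
      assume "\<not> card J \<le> 2"
      then have "3 \<le> card J" by simp
      then have "{\<one>, a, x} \<in> BB" by (rule Z[OF a(1) x J])
      then show False using nB by blast
    qed
  qed
qed

lemma rank_line:
  assumes a: "a \<in> carrier G" "a \<notin> P"
  shows "m_rank_of BB (insert \<one> (a <# P)) = 2"
proof -
  have e: "{\<one>, a, \<one>} = {\<one>, a}" by blast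
  have "card {\<one>, a} = 2" using ind_1a[OF a] by simp
  then have "{\<one>, a, \<one>} \<notin> BB" using card3 e by fastforce
  then show ?thesis using rank_line_x[OF a one_closed] by simp
qed

lemma cl_line:
  assumes a: "a \<in> carrier G" "a \<notin> P"
  shows "m_closure (carrier G) BB (insert \<one> (a <# P)) = L a"
  unfolding m_closure_def L_def rank_line[OF a] using rank_line_x[OF a] by blast

definition S where "S = lcosets P - {\<one> <# P}"
definition R where "R = snd (matroid_to_pair G BB)"

lemma mtp: "matroid_to_pair G BB = (P, R)"
  unfolding R_def by (simp add: matroid_to_pair_def Let_def cl1)

lemma R_def': "R = {(A, B). A \<in> S \<and> B \<in> S \<and>
   m_closure (carrier G) BB (insert \<one> A) = m_closure (carrier G) BB (insert \<one> B)}"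
  unfolding R_def S_def by (simp add: matroid_to_pair_def Let_def cl1)

lemma S_iff: "a \<in> carrier G \<Longrightarrow> a <# P \<in> S \<longleftrightarrow> a \<notin> P"
  unfolding S_def using lcosetsI lcos_one_iff[OF P_subgroup] by auto

lemma S_E: assumes A: "A \<in> S" obtains a where "a \<in> carrier G" "a \<notin> P" "A = a <# P"
proof -
  have "A \<in> lcosets P" using A unfolding S_def by blast
  then obtain a where a: "a \<in> carrier G" "A = a <# P" by (rule lcosetsE)
  then show ?thesis using that S_iff A by blast
qed

lemma R_sub: "(A, B) \<in> R \<Longrightarrow> A \<in> S \<and> B \<in> S"
  unfolding R_def' by blast

lemma R_iff: assumes a: "a \<in> carrier G" and b: "b \<in> carrier G"
  shows "(a <# P, b <# P) \<in> R \<longleftrightarrow> a \<notin> P \<and> b \<notin> P \<and> L a = L b"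
  unfolding R_def' using S_iff[OF a] S_iff[OF b] cl_line[OF a] cl_line[OF b] by auto

lemma EXCH:
  assumes u: "u \<in> carrier G" "u \<notin> P" and v: "v \<in> carrier G" "v \<notin> P"
    and nB: "{\<one>, u, v} \<notin> BB" and B: "{\<one>, v, x} \<in> BB"
  shows "{\<one>, u, x} \<in> BB"
proof (cases "u = v")
  case True then show ?thesis using B by simp
next
  case False
  have iu: "ind {\<one>, u}" "\<one> \<noteq> u" using ind_1a[OF u] by auto
  have "\<one> \<noteq> v" using ind_1a[OF v] by auto
  have c3: "card {\<one>, v, x} = 3" using card3[OF B] .
  have iB: "ind {\<one>, v, x}" using B unfolding m_indep_def by blast
  have c2: "card {\<one>, u} = 2" using iu by simp
  obtain w where w: "w \<in> {\<one>, v, x} - {\<one>, u}" "ind (insert w {\<one>, u})"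
    using augment[OF mb iu(1) iB] c2 c3 by auto
  have "w = v \<or> w = x" using w(1) by blast
  then show ?thesis
  proof
    assume "w = v"
    then have "ind {v, \<one>, u}" using w(2) by simp
    moreover have "card {v, \<one>, u} = 3" using False iu(2) \<open>\<one> \<noteq> v\<close> by (simp add: card_insert_if)
    ultimately have "{v, \<one>, u} \<in> BB" using basis_iff by blast
    moreover have "{v, \<one>, u} = {\<one>, u, v}" by blast
    ultimately show ?thesis using nB by simp
  next
    assume wx: "w = x"
    then have "x \<notin> {\<one>, u}" using w(1) by blast
    then have "card {x, \<one>, u} = 3" using iu(2) by (simp add: card_insert_if)
    moreover have "ind {x, \<one>, u}" using w(2) wx by simp
    ultimately have "{x, \<one>, u} \<in> BB" using basis_iff by blast
    moreover have "{x, \<one>, u} = {\<one>, u, x}" by blast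
    ultimately show ?thesis by simp
  qed
qed

lemma K:
  assumes u: "u \<in> carrier G" and v: "v \<in> carrier G"
  shows "{\<one>, u, v} \<in> BB \<longleftrightarrow> \<not> Cr G P R u v"
proof
  assume B: "{\<one>, u, v} \<in> BB"
  have c: "card {\<one>, u, v} = 3" using card3[OF B] .
  have d: "\<one> \<noteq> u" "\<one> \<noteq> v" "u \<noteq> v"
    using c by (auto simp: card_insert_if split: if_splits)
  have iB: "ind {\<one>, u, v}" using B unfolding m_indep_def by blast
  have "ind {\<one>, u}" "ind {\<one>, v}" using indep_subset[OF iB] by auto
  then have uP: "u \<notin> P" and vP: "v \<notin> P" using ind2_iff[OF one_closed u] ind2_iff[OF one_closed v] d u v by auto
  have "(u <# P, v <# P) \<notin> R"
  proof
    assume "(u <# P, v <# P) \<in> R"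
    then have "L u = L v" using R_iff[OF u v] by blast
    moreover have "v \<in> L v" unfolding L_def using v card3 d
      by (force simp: card_insert_if)
    ultimately have "v \<in> L u" by simp
    then show False using B unfolding L_def by simp
  qed
  then show "\<not> Cr G P R u v" unfolding Cr_def using uP vP by blast
next
  assume nC: "\<not> Cr G P R u v"
  then have uP: "u \<notin> P" and vP: "v \<notin> P" and nR: "(u <# P, v <# P) \<notin> R"
    unfolding Cr_def by auto
  show "{\<one>, u, v} \<in> BB"
  proof (rule ccontr)
    assume nB: "{\<one>, u, v} \<notin> BB"
    have nB': "{\<one>, v, u} \<notin> BB" using nB by (simp add: insert_commute)
    have "L u = L v"
      unfolding L_def using EXCH[OF u uP v vP nB] EXCH[OF v vP u uP nB'] by blast
    then show False using nR R_iff[OF u v] uP vP by blast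
  qed
qed

lemma BB_eq: "BB = BasesOf G P R"
proof
  show "BB \<subseteq> BasesOf G P R"
  proof
    fix T assume T: "T \<in> BB"
    then obtain x y z where T3: "T = {x, y, z}" using card3[OF T] card_3_iff by metis
    have xyz: "x \<in> carrier G" "y \<in> carrier G" "z \<in> carrier G" using basis_sub[OF T] T3 by auto
    have "{inv x \<otimes> x, inv x \<otimes> y, inv x \<otimes> z} \<in> BB"
      using B3_transl[of "inv x" x y z] xyz T T3 by simp
    then have "{\<one>, inv x \<otimes> y, inv x \<otimes> z} \<in> BB" using xyz by simp
    then have "\<not> colr G P R x y z" unfolding colr_def using K xyz by simp
    then show "T \<in> BasesOf G P R" unfolding BasesOf_def using T3 xyz by blast
  qed
next
  show "BasesOf G P R \<subseteq> BB"
  proof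
    fix T assume "T \<in> BasesOf G P R"
    then obtain x y z where T3: "T = {x, y, z}" and xyz: "x \<in> carrier G" "y \<in> carrier G" "z \<in> carrier G"
      and nc: "\<not> colr G P R x y z" unfolding BasesOf_def by blast
    have "{\<one>, inv x \<otimes> y, inv x \<otimes> z} \<in> BB" using K nc xyz unfolding colr_def by simp
    then have "{x \<otimes> \<one>, x \<otimes> (inv x \<otimes> y), x \<otimes> (inv x \<otimes> z)} \<in> BB"
      using B3_transl[of x \<one> "inv x \<otimes> y" "inv x \<otimes> z"] xyz by simp
    moreover have "x \<otimes> (inv x \<otimes> y) = y" "x \<otimes> (inv x \<otimes> z) = z"
      using xyz by (simp_all add: m_assoc[symmetric])
    ultimately show "T \<in> BB" using T3 xyz by simp
  qed
qed

end



context r3m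
begin

lemma ex_1uv: "\<exists>u v. u \<in> carrier G \<and> v \<in> carrier G \<and> {\<one>, u, v} \<in> BB"
proof -
  obtain T where T: "T \<in> BB" using ex_basis by blast
  then obtain x y z where T3: "T = {x, y, z}" using card3[OF T] card_3_iff by metis
  have xyz: "x \<in> carrier G" "y \<in> carrier G" "z \<in> carrier G" using basis_sub[OF T] T3 by auto
  have "{inv x \<otimes> x, inv x \<otimes> y, inv x \<otimes> z} \<in> BB"
    using B3_transl[of "inv x" x y z] xyz T T3 by simp
  then have "{\<one>, inv x \<otimes> y, inv x \<otimes> z} \<in> BB" using xyz by simp
  then show ?thesis using xyz by (intro exI[of _ "inv x \<otimes> y"] exI[of _ "inv x \<otimes> z"]) simp
qed

lemma equiv_ker: "equiv A {(x, y). x \<in> A \<and> y \<in> A \<and> f x = f y}"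
  unfolding equiv_def refl_on_def sym_def trans_def by auto

lemma R_equiv: "equiv S R"
  unfolding R_def' by (rule equiv_ker)

lemma valid: "valid_pair G P R"
proof -
  obtain u v where uv: "u \<in> carrier G" "v \<in> carrier G" "{\<one>, u, v} \<in> BB" using ex_1uv by blast
  then have nC: "\<not> Cr G P R u v" using K by blast
  then have uP: "u \<notin> P" and vP: "v \<notin> P" and nR: "(u <# P, v <# P) \<notin> R"
    unfolding Cr_def by auto
  have neq: "P \<noteq> carrier G" using uv uP by blast
  have uS: "u <# P \<in> S" and vS: "v <# P \<in> S" using S_iff uv uP vP by auto
  have c1: "R `` {u <# P} \<in> S // R" "R `` {v <# P} \<in> S // R"
    using uS vS by (auto intro: quotientI)
  have dif: "R `` {u <# P} \<noteq> R `` {v <# P}"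
  proof
    assume "R `` {u <# P} = R `` {v <# P}"
    moreover have "v <# P \<in> R `` {v <# P}" using vS R_equiv unfolding equiv_def refl_on_def by blast
    ultimately show False using nR by blast
  qed
  have finS: "finite (S // R)"
  proof -
    have "S \<subseteq> Pow (carrier G)" unfolding S_def using lcosets_subset_PowG[OF P_subgroup] by blast
    then have "finite S" using fin finite_subset by blast
    then show ?thesis using R_equiv by (simp add: finite_quotient equiv_def refl_on_def)
  qed
  have card2: "2 \<le> card (S // R)"
  proof -
    have "card {R `` {u <# P}, R `` {v <# P}} = 2" using dif by simp
    moreover have "card {R `` {u <# P}, R `` {v <# P}} \<le> card (S // R)"
      using c1 finS by (intro card_mono) auto
    ultimately show ?thesis by simp
  qed
  have cond1: "(inv a <# P, (inv a \<otimes> b) <# P) \<in> R"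
    if a: "a \<in> carrier G" and b: "b \<in> carrier G" and ab: "(a <# P, b <# P) \<in> R" "a <# P \<noteq> b <# P" for a b
  proof -
    have aP: "a \<notin> P" and bP: "b \<notin> P" using R_iff[OF a b] ab by auto
    have "Cr G P R a b" unfolding Cr_def using ab by blast
    then have "{\<one>, a, b} \<notin> BB" using K[OF a b] by blast
    then have "{inv a \<otimes> \<one>, inv a \<otimes> a, inv a \<otimes> b} \<notin> BB"
      using B3_transl[of "inv a" \<one> a b] a b by simp
    then have "{\<one>, inv a, inv a \<otimes> b} \<notin> BB" using a b by (simp add: insert_commute)
    then have C: "Cr G P R (inv a) (inv a \<otimes> b)" using K[of "inv a" "inv a \<otimes> b"] a b by simp
    have "inv a \<notin> P"
    proof
      assume "inv a \<in> P"
      then have "inv (inv a) \<in> P" by (rule P_inv)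
      then show False using aP a by simp
    qed
    moreover have "inv a \<otimes> b \<notin> P" using ab(2) lcos_eq_iff[OF P_subgroup a b] by blast
    ultimately show ?thesis using C unfolding Cr_def by blast
  qed
  have cond2: "((h \<otimes> a) <# P, (h \<otimes> b) <# P) \<in> R"
    if a: "a \<in> carrier G" and b: "b \<in> carrier G" and h: "h \<in> P" and ab: "(a <# P, b <# P) \<in> R" for a b h
  proof (rule ccontr)
    assume nr: "((h \<otimes> a) <# P, (h \<otimes> b) <# P) \<notin> R"
    have hc: "h \<in> carrier G" using h P_sub by blast
    have aP: "a \<notin> P" and bP: "b \<notin> P" using R_iff[OF a b] ab by auto
    have haP: "h \<otimes> a \<notin> P"
    proof
      assume "h \<otimes> a \<in> P"
      then have "inv h \<otimes> (h \<otimes> a) \<in> P" using P_inv P_mult h by blast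
      then show False using aP a hc by (simp add: m_assoc[symmetric])
    qed
    have hbP: "h \<otimes> b \<notin> P"
    proof
      assume "h \<otimes> b \<in> P"
      then have "inv h \<otimes> (h \<otimes> b) \<in> P" using P_inv P_mult h by blast
      then show False using bP b hc by (simp add: m_assoc[symmetric])
    qed
    have "\<not> Cr G P R (h \<otimes> a) (h \<otimes> b)" unfolding Cr_def using haP hbP nr by blast
    then have "{\<one>, h \<otimes> a, h \<otimes> b} \<in> BB" using K a b hc by simp
    then have "{inv h \<otimes> \<one>, inv h \<otimes> (h \<otimes> a), inv h \<otimes> (h \<otimes> b)} \<in> BB"
      using B3_transl[of "inv h" \<one> "h \<otimes> a" "h \<otimes> b"] a b hc by simp
    then have B: "{inv h, a, b} \<in> BB" using a b hc by (simp add: m_assoc[symmetric])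
    have ih: "inv h \<in> P" using P_inv h by blast
    have "inv h = \<one> \<or> \<not> ind {\<one>, inv h}" using ih unfolding P_def by blast
    then have "\<one> = inv h \<or> \<not> ind {inv h, \<one>}" by (metis insert_commute)
    then have "{\<one>, a, b} \<in> BB" by (rule PR[OF inv_closed[OF hc] one_closed B])
    then have "\<not> Cr G P R a b" using K a b by simp
    then show False using ab unfolding Cr_def by blast
  qed
  show ?thesis unfolding valid_pair_def S_def[symmetric]
  proof (intro conjI)
    show "\<forall>a\<in>carrier G. \<forall>b\<in>carrier G. (a <# P, b <# P) \<in> R \<and> a <# P \<noteq> b <# P \<longrightarrow>
        (inv a <# P, (inv a \<otimes> b) <# P) \<in> R" using cond1 by blast
    show "\<forall>a\<in>carrier G. \<forall>b\<in>carrier G. \<forall>h\<in>P. (a <# P, b <# P) \<in> R \<longrightarrow>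
        ((h \<otimes> a) <# P, (h \<otimes> b) <# P) \<in> R" using cond2 by blast
  qed (use P_subgroup neq R_equiv card2 in auto)
qed

lemma simple_iff: "P = {\<one>} \<longleftrightarrow> simple_matroid (carrier G) BB"
proof
  assume P1: "P = {\<one>}"
  show "simple_matroid (carrier G) BB"
    unfolding simple_matroid_def
  proof (intro allI impI)
    fix C assume C: "m_circuit (carrier G) BB C"
    then have Cs: "C \<subseteq> carrier G" and nI: "\<not> ind C" unfolding m_circuit_def by auto
    have fC: "finite C" using Cs fin finite_subset by blast
    show "3 \<le> card C"
    proof (rule ccontr)
      assume "\<not> 3 \<le> card C"
      then have "card C = 0 \<or> card C = 1 \<or> card C = 2" by linarith
      then show False
      proof (elim disjE)
        assume "card C = 0" then have "C = {}" using fC by simp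
        then show False using nI ind_empty by simp
      next
        assume "card C = 1" then obtain x where "C = {x}" by (rule card_1_singletonE)
        then show False using nI ind_single Cs by auto
      next
        assume "card C = 2" then obtain x y where xy: "C = {x, y}" "x \<noteq> y" by (metis card_2_iff)
        have xc: "x \<in> carrier G" and yc: "y \<in> carrier G" using xy Cs by auto
        have "inv x \<otimes> y \<noteq> \<one>"
        proof
          assume h: "inv x \<otimes> y = \<one>"
          have "y = x \<otimes> (inv x \<otimes> y)" using xc yc by (simp add: m_assoc[symmetric])
          also have "\<dots> = x" using h xc by simp
          finally show False using xy by simp
        qed
        then have "inv x \<otimes> y \<notin> P" using P1 by simp
        then have "ind {x, y}" using ind2_iff[OF xc yc xy(2)] by simp
        then show False using nI xy by simp
      qed
    qed
  qed
next
  assume sm: "simple_matroid (carrier G) BB"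
  show "P = {\<one>}"
  proof (rule ccontr)
    assume "P \<noteq> {\<one>}"
    then obtain x where x: "x \<in> P" "x \<noteq> \<one>" using one_P by blast
    then have xc: "x \<in> carrier G" and ni: "\<not> ind {\<one>, x}" unfolding P_def by auto
    have "m_circuit (carrier G) BB {\<one>, x}"
      unfolding m_circuit_def
    proof (intro conjI allI impI)
      show "{\<one>, x} \<subseteq> carrier G" using xc by simp
      show "\<not> ind {\<one>, x}" using ni .
      fix D assume D: "D \<subset> {\<one>, x}"
      then have "D \<subseteq> {\<one>} \<or> D \<subseteq> {x}" by blast
      then show "ind D" using ind_single[OF one_closed] ind_single[OF xc] indep_subset by blast
    qed
    then have "3 \<le> card {\<one>, x}" using sm unfolding simple_matroid_def by blast
    then show False using x by simp
  qed
qed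

end



locale vp = group G for G :: "('a, 'b) monoid_scheme" (structure) +
  fixes H :: "'a set" and r :: "('a set \<times> 'a set) set"
  assumes V: "valid_pair G H r" and finG: "finite (carrier G)"
begin

abbreviation C where "C \<equiv> Cr G H r"
abbreviation col where "col \<equiv> colr G H r"
abbreviation Bs where "Bs \<equiv> BasesOf G H r"
definition Sv where "Sv = lcosets H - {\<one> <# H}"

lemma sg: "subgroup H G" using V unfolding valid_pair_def by blast
lemma Hne: "H \<noteq> carrier G" using V unfolding valid_pair_def by blast
lemma eqv: "equiv Sv r" using V unfolding valid_pair_def Sv_def by blast
lemma card2: "2 \<le> card (Sv // r)" using V unfolding valid_pair_def Sv_def by blast
lemma cond1: "a \<in> carrier G \<Longrightarrow> b \<in> carrier G \<Longrightarrow> (a <# H, b <# H) \<in> r \<Longrightarrow> a <# H \<noteq> b <# H \<Longrightarrow>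
   (inv a <# H, (inv a \<otimes> b) <# H) \<in> r" using V unfolding valid_pair_def by blast
lemma cond2: "a \<in> carrier G \<Longrightarrow> b \<in> carrier G \<Longrightarrow> h \<in> H \<Longrightarrow> (a <# H, b <# H) \<in> r \<Longrightarrow>
   ((h \<otimes> a) <# H, (h \<otimes> b) <# H) \<in> r" using V unfolding valid_pair_def by blast

lemma H_sub: "H \<subseteq> carrier G" using subgroup.subset[OF sg] .

lemma Sv_iff: "u \<in> carrier G \<Longrightarrow> u <# H \<in> Sv \<longleftrightarrow> u \<notin> H"
  unfolding Sv_def using lcosetsI lcos_one_iff[OF sg] by auto

lemma r_sub: "(A, B) \<in> r \<Longrightarrow> A \<in> Sv \<and> B \<in> Sv"
  using eqv unfolding equiv_def refl_on_def by blast

lemma r_refl: "A \<in> Sv \<Longrightarrow> (A, A) \<in> r"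
  using eqv unfolding equiv_def refl_on_def by blast

lemma r_sym: "(A, B) \<in> r \<Longrightarrow> (B, A) \<in> r"
  using eqv unfolding equiv_def sym_def by blast

lemma r_trans: "(A, B) \<in> r \<Longrightarrow> (B, D) \<in> r \<Longrightarrow> (A, D) \<in> r"
  using eqv unfolding equiv_def trans_def by blast

lemma C_sym: "C u v \<Longrightarrow> C v u"
  unfolding Cr_def using r_sym by blast

lemma C_refl: "u \<in> carrier G \<Longrightarrow> C u u"
  unfolding Cr_def using Sv_iff r_refl by blast

lemma C_par: assumes u: "u \<in> carrier G" and v: "v \<in> carrier G" and h: "inv u \<otimes> v \<in> H"
  shows "C u v"
proof -
  have "u <# H = v <# H" using lcos_eq_iff[OF sg u v] h by simp
  then show ?thesis using C_refl[OF u] unfolding Cr_def by metis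
qed

lemma inv_inv_mult: "x \<in> carrier G \<Longrightarrow> y \<in> carrier G \<Longrightarrow> inv (inv x \<otimes> y) = inv y \<otimes> x"
  by (simp add: inv_mult_group)

lemma C_inv: assumes u: "u \<in> carrier G" and v: "v \<in> carrier G" and c: "C u v"
  shows "C (inv u) (inv u \<otimes> v)"
proof -
  have iu: "inv u \<in> carrier G" using u by simp
  have iuv: "inv u \<otimes> v \<in> carrier G" using u v by simp
  show ?thesis
  proof (cases "u \<in> H")
    case True
    then have "inv u \<in> H" using subgroup.m_inv_closed[OF sg] by blast
    then show ?thesis unfolding Cr_def by blast
  next
    case uH: False
    show ?thesis
    proof (cases "v \<in> H")
      case True
      have "inv (inv u) \<otimes> (inv u \<otimes> v) = v" using u v by (simp add: m_assoc[symmetric])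
      then show ?thesis using C_par[OF iu iuv] True by simp
    next
      case vH: False
      then have rr: "(u <# H, v <# H) \<in> r" using c uH unfolding Cr_def by blast
      show ?thesis
      proof (cases "u <# H = v <# H")
        case True
        then have "inv u \<otimes> v \<in> H" using lcos_eq_iff[OF sg u v] by simp
        then show ?thesis unfolding Cr_def by blast
      next
        case False
        then show ?thesis using cond1[OF u v rr] unfolding Cr_def by blast
      qed
    qed
  qed
qed

lemma C_H: assumes u: "u \<in> carrier G" and v: "v \<in> carrier G" and h: "h \<in> H" and c: "C u v"
  shows "C (h \<otimes> u) (h \<otimes> v)"
proof -
  have hc: "h \<in> carrier G" using h H_sub by blast
  have "u \<in> H \<Longrightarrow> h \<otimes> u \<in> H" "v \<in> H \<Longrightarrow> h \<otimes> v \<in> H"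
    using subgroup.m_closed[OF sg] h by blast+
  then show ?thesis using c cond2[OF u v h] unfolding Cr_def by blast
qed

lemma C_T: assumes "u \<notin> H" "v \<notin> H" "C u v" "C u w" shows "C v w"
proof -
  have uv: "(u <# H, v <# H) \<in> r" using assms unfolding Cr_def by blast
  show ?thesis
  proof (cases "w \<in> H")
    case False
    then have "(u <# H, w <# H) \<in> r" using assms unfolding Cr_def by blast
    then have "(v <# H, w <# H) \<in> r" using r_sym[OF uv] r_trans by blast
    then show ?thesis unfolding Cr_def by blast
  qed (simp add: Cr_def)
qed

lemma col_12: assumes x: "x \<in> carrier G" and y: "y \<in> carrier G" and z: "z \<in> carrier G"
  and c: "col x y z" shows "col y x z"
proof -
  have "C (inv (inv x \<otimes> y)) (inv (inv x \<otimes> y) \<otimes> (inv x \<otimes> z))"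
    using C_inv c x y z unfolding colr_def by simp
  then show ?thesis unfolding colr_def using inv_inv_mult[OF x y] inv_mult_cancel[OF x y z] by simp
qed

lemma col_23: "col x y z \<Longrightarrow> col x z y"
  unfolding colr_def using C_sym by blast

lemma col_12_iff: "x \<in> carrier G \<Longrightarrow> y \<in> carrier G \<Longrightarrow> z \<in> carrier G \<Longrightarrow> col x y z \<longleftrightarrow> col y x z"
  using col_12 by blast

lemma col_23_iff: "col x y z \<longleftrightarrow> col x z y"
  using col_23 by blast

lemma col_xx: "x \<in> carrier G \<Longrightarrow> col x x z"
  unfolding colr_def Cr_def using subgroup.one_closed[OF sg] by simp

lemma col_yy: "x \<in> carrier G \<Longrightarrow> y \<in> carrier G \<Longrightarrow> col x y y"
  unfolding colr_def using C_refl by simp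

lemma col_T:
  assumes "inv x \<otimes> y \<notin> H" "inv x \<otimes> z \<notin> H" "col x y z" "col x y w"
  shows "col x z w"
  using C_T assms unfolding colr_def by blast

lemma assoc_cancel: "a \<in> carrier G \<Longrightarrow> x \<in> carrier G \<Longrightarrow> y \<in> carrier G \<Longrightarrow>
   (a \<otimes> x) \<otimes> (inv x \<otimes> y) = a \<otimes> y"
  by (simp add: m_assoc) (simp add: m_assoc[symmetric])

lemma col_par:
  assumes x: "x \<in> carrier G" and x': "x' \<in> carrier G" and y: "y \<in> carrier G" and z: "z \<in> carrier G"
    and h: "inv x \<otimes> x' \<in> H" and c: "col x y z"
  shows "col x' y z"
proof -
  have hh: "inv x' \<otimes> x \<in> H"
    using subgroup.m_inv_closed[OF sg h] inv_inv_mult[OF x x'] by simp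
  have "C ((inv x' \<otimes> x) \<otimes> (inv x \<otimes> y)) ((inv x' \<otimes> x) \<otimes> (inv x \<otimes> z))"
    using C_H[OF _ _ hh] c x y z unfolding colr_def by simp
  then show ?thesis unfolding colr_def using assoc_cancel x x' y z by simp
qed

lemma inH_inv: "x \<in> carrier G \<Longrightarrow> y \<in> carrier G \<Longrightarrow> inv x \<otimes> y \<in> H \<longleftrightarrow> inv y \<otimes> x \<in> H"
  by (metis inv_closed inv_inv_mult inv_inv m_closed sg subgroup.m_inv_closed)

lemma LS:
  assumes a: "a \<in> carrier G" and b: "b \<in> carrier G" and y1: "y1 \<in> carrier G"
    and y2: "y2 \<in> carrier G" and y3: "y3 \<in> carrier G"
    and ab: "inv a \<otimes> b \<notin> H" and c1: "col a b y1" and c2: "col a b y2" and c3: "col a b y3"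
  shows "col y1 y2 y3"
proof (cases "inv y1 \<otimes> y2 \<in> H \<or> inv y1 \<otimes> y3 \<in> H")
  case True
  then show ?thesis unfolding colr_def Cr_def by blast
next
  case False
  then have n2: "inv y1 \<otimes> y2 \<notin> H" by blast
  show ?thesis
  proof (cases "inv a \<otimes> y1 \<in> H")
    case False
    have "col a y1 y2" "col a y1 y3" using col_T[OF ab False] c1 c2 c3 by blast+
    then have d: "col y1 a y2" "col y1 a y3" using col_12 a y1 y2 y3 by blast+
    have "inv y1 \<otimes> a \<notin> H" using False inH_inv a y1 by blast
    then show ?thesis using col_T d n2 by blast
  next
    case True
    have d: "col y1 b y2" "col y1 b y3" using col_par[OF a y1 b] True c2 c3 y2 y3 by blast+
    have "inv y1 \<otimes> b \<notin> H"
    proof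
      assume "inv y1 \<otimes> b \<in> H"
      then have "(inv a \<otimes> y1) \<otimes> (inv y1 \<otimes> b) \<in> H" using True subgroup.m_closed[OF sg] by blast
      then show False using ab assoc_cancel[OF inv_closed[OF a] y1 b] a by simp
    qed
    then show ?thesis using col_T d n2 by blast
  qed
qed

lemma ncol_distinct: "x \<in> carrier G \<Longrightarrow> y \<in> carrier G \<Longrightarrow> z \<in> carrier G \<Longrightarrow> \<not> col x y z \<Longrightarrow>
   x \<noteq> y \<and> y \<noteq> z \<and> x \<noteq> z"
  using col_xx col_yy col_23 by blast

lemma ncol_perms:
  assumes "a \<in> carrier G" "b \<in> carrier G" "c \<in> carrier G" "\<not> col a b c"
  shows "\<not> col a c b" "\<not> col b a c" "\<not> col b c a" "\<not> col c a b" "\<not> col c b a"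
  using assms col_12 col_23 by blast+

lemma mem_Bs:
  assumes x: "x \<in> carrier G" and y: "y \<in> carrier G" and z: "z \<in> carrier G"
  shows "{x, y, z} \<in> Bs \<longleftrightarrow> \<not> col x y z"
proof
  assume "{x, y, z} \<in> Bs"
  then obtain a b c where abc: "{x, y, z} = {a, b, c}" "a \<in> carrier G" "b \<in> carrier G" "c \<in> carrier G"
    and nc: "\<not> col a b c" unfolding BasesOf_def by blast
  have d: "a \<noteq> b" "b \<noteq> c" "a \<noteq> c" using ncol_distinct[OF abc(2-4) nc] by auto
  have p: "\<not> col a c b" "\<not> col b a c" "\<not> col b c a" "\<not> col c a b" "\<not> col c b a"
    using ncol_perms[OF abc(2-4) nc] by auto
  have "card {x, y, z} = 3" using abc(1) d by simp
  then have dxyz: "x \<noteq> y" "y \<noteq> z" "x \<noteq> z" by (auto simp: card_insert_if split: if_splits)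
  have m: "x \<in> {a, b, c}" "y \<in> {a, b, c}" "z \<in> {a, b, c}" using abc(1) by blast+
  show "\<not> col x y z" using m dxyz nc p by auto
qed (use x y z in \<open>auto simp: BasesOf_def\<close>)

lemma Bs_sub: "B \<in> Bs \<Longrightarrow> B \<subseteq> carrier G"
  unfolding BasesOf_def by auto

lemma Bs_exch:
  assumes B1: "B1 \<in> Bs" and B2: "B2 \<in> Bs" and x: "x \<in> B1 - B2"
  shows "\<exists>y\<in>B2 - B1. insert y (B1 - {x}) \<in> Bs"
proof -
  obtain a b c where abc: "B1 = {a, b, c}" "a \<in> carrier G" "b \<in> carrier G" "c \<in> carrier G"
    and nc: "\<not> col a b c" using B1 unfolding BasesOf_def by blast
  have d: "a \<noteq> b" "b \<noteq> c" "a \<noteq> c" using ncol_distinct[OF abc(2-4) nc] by auto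
  have p: "\<not> col a c b" "\<not> col b a c" "\<not> col b c a" "\<not> col c a b" "\<not> col c b a"
    using ncol_perms[OF abc(2-4) nc] by auto
  obtain p q where pq: "B1 = {x, p, q}" "B1 - {x} = {p, q}" "p \<in> carrier G" "q \<in> carrier G"
    "x \<in> carrier G" "\<not> col x p q"
  proof -
    have "x = a \<or> x = b \<or> x = c" using x abc(1) by blast
    then show ?thesis
    proof (elim disjE)
      assume "x = a" then show ?thesis using that[of b c] abc d nc by auto
    next
      assume "x = b" then show ?thesis using that[of a c] abc d p by auto
    next
      assume "x = c" then show ?thesis using that[of a b] abc d p by auto
    qed
  qed
  have npq: "inv p \<otimes> q \<notin> H"
  proof
    assume "inv p \<otimes> q \<in> H"
    then have "col p q x" unfolding colr_def Cr_def by blast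
    then have "col q p x" using col_12 pq(3,4,5) by blast
    then have "col q x p" by (rule col_23)
    then have "col x q p" using col_12 pq(3,4,5) by blast
    then have "col x p q" by (rule col_23)
    then show False using pq by blast
  qed
  obtain y1 y2 y3 where y: "B2 = {y1, y2, y3}" "y1 \<in> carrier G" "y2 \<in> carrier G" "y3 \<in> carrier G"
    and ny: "\<not> col y1 y2 y3" using B2 unfolding BasesOf_def by blast
  have "\<exists>y\<in>B2. \<not> col p q y"
  proof (rule ccontr)
    assume "\<not> ?thesis"
    then have "col p q y1" "col p q y2" "col p q y3" using y(1) by auto
    then have "col y1 y2 y3" using LS[OF pq(3,4) y(2-4) npq] by blast
    then show False using ny by blast
  qed
  then obtain w where w: "w \<in> B2" "\<not> col p q w" by blast
  have wc: "w \<in> carrier G" using w(1) Bs_sub[OF B2] by blast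
  have "w \<noteq> p"
  proof
    assume "w = p"
    then have "col p q w" using col_23[OF col_xx[OF pq(3)]] by simp
    then show False using w(2) by simp
  qed
  moreover have "w \<noteq> q"
  proof
    assume "w = q"
    then have "col p q w" using col_yy[OF pq(3,4)] by simp
    then show False using w(2) by simp
  qed
  moreover have "w \<noteq> x" using w(1) x by blast
  ultimately have wB: "w \<in> B2 - B1" using w(1) pq(1) by blast
  have "insert w (B1 - {x}) = {p, q, w}" using pq(2) by blast
  moreover have "{p, q, w} \<in> Bs" using mem_Bs[OF pq(3,4) wc] w(2) by simp
  ultimately show ?thesis using wB by metis
qed

lemma ex_nC:
  assumes u: "u \<in> carrier G" "u \<notin> H"
  shows "\<exists>w\<in>carrier G. \<not> C u w"
proof -
  have uS: "u <# H \<in> Sv" using Sv_iff u by simp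
  have fin: "finite (Sv // r)"
  proof -
    have "Sv \<subseteq> Pow (carrier G)" unfolding Sv_def using lcosets_subset_PowG[OF sg] by blast
    then have "finite Sv" using finG finite_subset by blast
    then show ?thesis using eqv by (simp add: finite_quotient equiv_def refl_on_def)
  qed
  have "\<exists>X\<in>Sv // r. X \<noteq> r `` {u <# H}"
  proof (rule ccontr)
    assume "\<not> ?thesis"
    then have "Sv // r \<subseteq> {r `` {u <# H}}" by blast
    then have "card (Sv // r) \<le> 1" using card_mono[of "{r `` {u <# H}}"] by simp
    then show False using card2 by simp
  qed
  then obtain X where X: "X \<in> Sv // r" "X \<noteq> r `` {u <# H}" by blast
  then obtain A where A: "A \<in> Sv" "X = r `` {A}" by (auto elim: quotientE)
  then obtain w where w: "w \<in> carrier G" "A = w <# H" unfolding Sv_def by (auto elim: lcosetsE)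
  have wH: "w \<notin> H" using A(1) w Sv_iff by simp
  have "(u <# H, w <# H) \<notin> r"
  proof
    assume "(u <# H, w <# H) \<in> r"
    then have "r `` {u <# H} = r `` {w <# H}" using equiv_class_eq[OF eqv] by blast
    then show False using X A w by simp
  qed
  then have "\<not> C u w" unfolding Cr_def using u wH by blast
  then show ?thesis using w by blast
qed

lemma col_1: "u \<in> carrier G \<Longrightarrow> v \<in> carrier G \<Longrightarrow> col \<one> u v \<longleftrightarrow> C u v"
  unfolding colr_def by simp

lemma mb_Bs: "matroid_bases (carrier G) Bs"
proof -
  obtain u where u: "u \<in> carrier G" "u \<notin> H" using Hne H_sub by blast
  obtain w where w: "w \<in> carrier G" "\<not> C u w" using ex_nC[OF u] by blast
  have "{\<one>, u, w} \<in> Bs" using mem_Bs[OF one_closed u(1) w(1)] col_1 u w by simp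
  then show ?thesis unfolding matroid_bases_def using finG Bs_sub Bs_exch by blast
qed

lemma ginv_Bs: "G_invariant G Bs"
  unfolding G_invariant_def
proof (intro ballI)
  fix g B assume g: "g \<in> carrier G" and B: "B \<in> Bs"
  then obtain x y z where xyz: "B = {x, y, z}" "x \<in> carrier G" "y \<in> carrier G" "z \<in> carrier G"
    and nc: "\<not> col x y z" unfolding BasesOf_def by blast
  have e: "g <# B = {g \<otimes> x, g \<otimes> y, g \<otimes> z}" using xyz by (simp add: l_coset_insert l_coset_empty)
  have "\<not> col (g \<otimes> x) (g \<otimes> y) (g \<otimes> z)" unfolding colr_def
    using inv_mult_transl[OF g xyz(2) xyz(3)] inv_mult_transl[OF g xyz(2) xyz(4)] nc
    unfolding colr_def by simp
  then show "g <# B \<in> Bs" using e mem_Bs g xyz by simp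
qed

lemma rank_Bs: "matroid_rank (carrier G) Bs = 3"
proof -
  obtain u where u: "u \<in> carrier G" "u \<notin> H" using Hne H_sub by blast
  obtain w where w: "w \<in> carrier G" "\<not> C u w" using ex_nC[OF u] by blast
  have nc: "\<not> col \<one> u w" using col_1 u w by simp
  have B: "{\<one>, u, w} \<in> Bs" using mem_Bs[OF one_closed u(1) w(1)] nc by simp
  have "card {\<one>, u, w} = 3" using ncol_distinct[OF one_closed u(1) w(1) nc] by simp
  then show ?thesis unfolding matroid_rank_def using rank_basis[OF mb_Bs B] by simp
qed

lemma r3m_Bs: "r3m G Bs"
  by (intro r3m.intro is_group r3m_axioms.intro mb_Bs ginv_Bs rank_Bs)

lemma pair_in_basis:
  assumes B: "B \<in> Bs" and p: "p \<in> B" and q: "q \<in> B" and pq: "p \<noteq> q"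
  shows "inv p \<otimes> q \<notin> H"
proof -
  obtain a b c where abc: "B = {a, b, c}" "a \<in> carrier G" "b \<in> carrier G" "c \<in> carrier G"
    and nc: "\<not> col a b c" using B unfolding BasesOf_def by blast
  have ps: "\<not> col a c b" "\<not> col b a c" "\<not> col b c a" "\<not> col c a b" "\<not> col c b a"
    using ncol_perms[OF abc(2-4) nc] by auto
  have gen: "inv s \<otimes> t \<notin> H" if "\<not> col s t v" for s t v
    using that unfolding colr_def Cr_def by blast
  have "p \<in> {a, b, c}" "q \<in> {a, b, c}" using p q abc by auto
  then show ?thesis using pq gen[OF nc] gen[OF ps(1)] gen[OF ps(2)] gen[OF ps(3)] gen[OF ps(4)] gen[OF ps(5)]
    by auto
qed

end



context vp
begin

lemma P_eq: "r3m.P G Bs = H"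
proof -
  interpret M: r3m G Bs by (rule r3m_Bs)
  show ?thesis
  proof
    show "M.P \<subseteq> H"
    proof
      fix x assume x: "x \<in> M.P"
      then have xc: "x \<in> carrier G" unfolding M.P_def by blast
      show "x \<in> H"
      proof (rule ccontr)
        assume xH: "x \<notin> H"
        then have x1: "x \<noteq> \<one>" using subgroup.one_closed[OF sg] by blast
        obtain w where w: "w \<in> carrier G" "\<not> C x w" using ex_nC[OF xc xH] by blast
        have "{\<one>, x, w} \<in> Bs" using mem_Bs[OF one_closed xc w(1)] col_1 xc w by simp
        then have "m_indep Bs {\<one>, x}" unfolding m_indep_def by blast
        then show False using x x1 unfolding M.P_def by blast
      qed
    qed
  next
    show "H \<subseteq> M.P"
    proof
      fix x assume xH: "x \<in> H"
      then have xc: "x \<in> carrier G" using H_sub by blast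
      have "x = \<one> \<or> \<not> m_indep Bs {\<one>, x}"
      proof (rule ccontr)
        assume "\<not> ?thesis"
        then have x1: "x \<noteq> \<one>" and i: "m_indep Bs {\<one>, x}" by auto
        then obtain B where B: "B \<in> Bs" "{\<one>, x} \<subseteq> B" unfolding m_indep_def by blast
        have "inv \<one> \<otimes> x \<notin> H" by (rule pair_in_basis[OF B(1)]) (use B(2) x1 in auto)
        then show False using xH xc by simp
      qed
      then show "x \<in> M.P" unfolding M.P_def using xc by blast
    qed
  qed
qed

lemma L_eq: "a \<in> carrier G \<Longrightarrow> r3m.L G Bs a = {x \<in> carrier G. C a x}"
proof -
  interpret M: r3m G Bs by (rule r3m_Bs)
  assume a: "a \<in> carrier G"
  show ?thesis unfolding M.L_def using mem_Bs[OF one_closed a] col_1[OF a] by auto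
qed

lemma R_eq: "r3m.R G Bs = r"
proof -
  interpret M: r3m G Bs by (rule r3m_Bs)
  have SS: "M.S = Sv" unfolding M.S_def Sv_def P_eq ..
  show ?thesis
  proof
    show "M.R \<subseteq> r"
    proof
    fix AB assume AB: "AB \<in> M.R"
    obtain A B where AB': "AB = (A, B)" by fastforce
    have "A \<in> M.S" "B \<in> M.S" using M.R_sub AB AB' by auto
    then obtain a b where a: "a \<in> carrier G" "a \<notin> H" "A = a <# H"
      and b: "b \<in> carrier G" "b \<notin> H" "B = b <# H"
      using P_eq by (metis M.S_E)
    have "M.L a = M.L b" using M.R_iff[OF a(1) b(1)] AB AB' a b P_eq by simp
    then have "{x \<in> carrier G. C a x} = {x \<in> carrier G. C b x}" using L_eq a b by simp
    moreover have "b \<in> {x \<in> carrier G. C b x}" using C_refl b by blast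
    ultimately have "C a b" by blast
    then show "AB \<in> r" using AB' a b unfolding Cr_def by blast
    qed
  next
    show "r \<subseteq> M.R"
    proof
    fix AB assume AB: "AB \<in> r"
    obtain A B where AB': "AB = (A, B)" by fastforce
    have "A \<in> M.S" "B \<in> M.S" using r_sub AB AB' SS by auto
    then obtain a b where a: "a \<in> carrier G" "a \<notin> H" "A = a <# H"
      and b: "b \<in> carrier G" "b \<notin> H" "B = b <# H"
      using P_eq by (metis M.S_E)
    have ab: "C a b" using AB AB' a b unfolding Cr_def by blast
    have ba: "C b a" using C_sym[OF ab] .
    have "{x \<in> carrier G. C a x} = {x \<in> carrier G. C b x}"
      using C_T[OF a(2) b(2) ab] C_T[OF b(2) a(2) ba] by blast
    then have "M.L a = M.L b" using L_eq a b by simp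
    then show "AB \<in> M.R" using M.R_iff[OF a(1) b(1)] AB' a b P_eq by simp
    qed
  qed
qed

lemma mtp_Bs: "matroid_to_pair G Bs = (H, r)"
  using r3m.mtp[OF r3m_Bs] P_eq R_eq by simp

lemma Bs_in: "Bs \<in> rank3_inv_matroids G"
  unfolding rank3_inv_matroids_def using mb_Bs ginv_Bs rank_Bs by blast

end

theorem corollary3p31:
  fixes G :: "('a, 'b) monoid_scheme"
  assumes "group G" and "finite (carrier G)"
  shows "bij_betw (matroid_to_pair G) (rank3_inv_matroids G) (valid_pairs G) \<and>
         (\<forall>\<B>\<in>rank3_inv_matroids G.
            fst (matroid_to_pair G \<B>) = {\<one>\<^bsub>G\<^esub>} \<longleftrightarrow> simple_matroid (carrier G) \<B>)"
proof -
  have R3: "r3m G BB" if "BB \<in> rank3_inv_matroids G" for BB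
    using that assms(1) unfolding rank3_inv_matroids_def
    by (intro r3m.intro r3m_axioms.intro) auto
  have rep: "BB = BasesOf G (fst (matroid_to_pair G BB)) (snd (matroid_to_pair G BB))"
    if "BB \<in> rank3_inv_matroids G" for BB
    using r3m.BB_eq[OF R3[OF that]] r3m.mtp[OF R3[OF that]] by simp
  have inj: "inj_on (matroid_to_pair G) (rank3_inv_matroids G)"
  proof (rule inj_onI)
    fix x y assume x: "x \<in> rank3_inv_matroids G" and y: "y \<in> rank3_inv_matroids G"
      and e: "matroid_to_pair G x = matroid_to_pair G y"
    show "x = y" using rep[OF x] rep[OF y] e by metis
  qed
  have img1: "matroid_to_pair G ` rank3_inv_matroids G \<subseteq> valid_pairs G"
  proof
    fix p assume "p \<in> matroid_to_pair G ` rank3_inv_matroids G"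
    then obtain BB where BB: "BB \<in> rank3_inv_matroids G" "p = matroid_to_pair G BB" by blast
    show "p \<in> valid_pairs G"
      using r3m.valid[OF R3[OF BB(1)]] r3m.mtp[OF R3[OF BB(1)]] BB(2)
      unfolding valid_pairs_def by simp
  qed
  have img2: "valid_pairs G \<subseteq> matroid_to_pair G ` rank3_inv_matroids G"
  proof
    fix p assume p: "p \<in> valid_pairs G"
    obtain H r where Hr: "p = (H, r)" by fastforce
    have V: "vp G H r" using p Hr assms unfolding valid_pairs_def
      by (intro vp.intro vp_axioms.intro) auto
    show "p \<in> matroid_to_pair G ` rank3_inv_matroids G"
      using vp.mtp_Bs[OF V] vp.Bs_in[OF V] Hr by (metis rev_image_eqI)
  qed
  have simp_part: "\<forall>\<B>\<in>rank3_inv_matroids G.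
            fst (matroid_to_pair G \<B>) = {\<one>\<^bsub>G\<^esub>} \<longleftrightarrow> simple_matroid (carrier G) \<B>"
    using r3m.simple_iff r3m.mtp R3 by fastforce
  show ?thesis unfolding bij_betw_def using inj img1 img2 simp_part by blast
qed


end
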